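(* Let $N\ge2$, $p\in(1,p_N)$, $\Omega\subset\mathbb{R}^N$ a bounded domain of class $C^{2,\beta}$ with $|\Omega|=1$, and let $(\alpha_n,\psi_n)$ be a sequence of variational solutions of $(\mathbf{P}_{\lambda_n})$ with $\lambda_n\to+\infty$ and $|\alpha_n|\to+\infty$. Then there is $C_2>0$ with $\int_\Omega[\alpha_n+\lambda_n\psi_n]_+^{p+1}\le C_2|\alpha_n|$, and in particular $$\limsup_{n\to+\infty}|\alpha_n|^{-1}\int_\Omega[\alpha_n+\lambda_n\psi_n]_+^{p+1}\le\frac{p+1}{p-1}.$$
   Context: $p_N=+\infty$ if $N=2$ and $p_N=\frac N{N-2}$ if $N\ge3$; $[s]_+=\max\{s,0\}$. Problem $(\mathbf{P}_\lambda)$: find $(\alpha,\psi)\in\mathbb{R}\times C^{2,\beta}(\overline\Omega)$ with $-\Delta\psi=[\alpha+\lambda\psi]_+^p$ in $\Omega$, $\psi=0$ on $\partial\Omega$, $\int_\Omega[\alpha+\lambda\psi]_+^p=1$. Variational solutions: let $G$ be the Dirichlet Green function of $\Omega$, $G[\rho](x)=\int_\Omega G(x,y)\rho(y)dy$, $\mathcal{P}=\{\rho\in L^{1+1/p}(\Omega):\int_\Omega\rho=1,\ \rho\ge0\}$ and $\mathcal{F}_\lambda(\rho)=\frac p{p+1}\int_\Omega\rho^{1+1/p}-\frac\lambda2\int_\Omega\rho G[\rho]$. A solution $(\alpha_\lambda,\psi_\lambda)$ of $(\mathbf{P}_\lambda)$ is variational if $\rho_\lambda=[\alpha_\lambda+\lambda\psi_\lambda]_+^p$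 minimizes $\mathcal{F}_\lambda$ on $\mathcal{P}$, $\psi_\lambda=G[\rho_\lambda]$, and $\alpha_\lambda$ is the associated Lagrange multiplier of the mass constraint. *)

theory Defs
  imports "HOL-Analysis.Analysis"
begin

definition pospart :: "real \<Rightarrow> real" where
  "pospart s = max s 0"

definition hoelder_on :: "real \<Rightarrow> ('a::metric_space) set \<Rightarrow> ('a \<Rightarrow> real) \<Rightarrow> bool" where
  "hoelder_on b S f \<longleftrightarrow> (\<exists>L. \<forall>x\<in>S. \<forall>y\<in>S. \<bar>f x - f y\<bar> \<le> L * dist x y powr b)"

definition C2_with :: "(real^'n) set \<Rightarrow> (real^'n \<Rightarrow> real) \<Rightarrow> ('n \<Rightarrow> real^'n \<Rightarrow> real)
      \<Rightarrow> ('n \<Rightarrow> 'n \<Rightarrow> real^'n \<Rightarrow> real) \<Rightarrow> bool" where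
  "C2_with U f D D2 \<longleftrightarrow>
     (\<forall>x\<in>U. (f has_derivative (\<lambda>h. \<Sum>i\<in>UNIV. D i x * h $ i)) (at x)) \<and>
     (\<forall>i. \<forall>x\<in>U. (D i has_derivative (\<lambda>h. \<Sum>j\<in>UNIV. D2 i j x * h $ j)) (at x)) \<and>
     (\<forall>i j. continuous_on U (D2 i j))"

definition has_laplacian_on :: "(real^'n) set \<Rightarrow> (real^'n \<Rightarrow> real) \<Rightarrow> (real^'n \<Rightarrow> real) \<Rightarrow> bool" where
  "has_laplacian_on U f L \<longleftrightarrow>
     (\<exists>D D2. C2_with U f D D2 \<and> (\<forall>x\<in>U. L x = (\<Sum>i\<in>UNIV. D2 i i x)))"

definition C2b_closure :: "real \<Rightarrow> (real^'n) set \<Rightarrow> (real^'n \<Rightarrow> real) \<Rightarrow> bool" where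
  "C2b_closure b U f \<longleftrightarrow>
     (\<exists>D D2. C2_with U f D D2 \<and>
        continuous_on (closure U) f \<and> bounded (f ` U) \<and>
        (\<forall>i. continuous_on (closure U) (D i) \<and> bounded (D i ` U)) \<and>
        (\<forall>i j. continuous_on (closure U) (D2 i j) \<and> bounded (D2 i j ` U) \<and>
               hoelder_on b U (D2 i j)))"

text \<open>Bounded domain of class C^{2,b}: open, connected, bounded, and near every
  boundary point, after an orthogonal change of coordinates, the domain is the
  subgraph of a C^{2,b} function of the remaining N-1 coordinates.\<close>
definition C2b_domain :: "real \<Rightarrow> (real^'n) set \<Rightarrow> bool" where
  "C2b_domain b \<Omega> \<longleftrightarrow> open \<Omega> \<and> connected \<Omega> \<and> \<Omega> \<noteq> {} \<and> bounded \<Omega> \<and>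
     (\<forall>x0\<in>frontier \<Omega>. \<exists>r>0. \<exists>(T::real^'n \<Rightarrow> real^'n) k g.
        orthogonal_transformation T \<and>
        (\<forall>y z. (\<forall>i. i \<noteq> k \<longrightarrow> y $ i = z $ i) \<longrightarrow> g y = g z) \<and>
        C2b_closure b (T ` ball x0 r) g \<and>
        \<Omega> \<inter> ball x0 r = {x \<in> ball x0 r. (T x) $ k < g (T x)})"

text \<open>Fundamental solution of -Laplace in R^N, N = CARD('n).\<close>
definition fund_sol :: "real^'n \<Rightarrow> real" where
  "fund_sol z = (if CARD('n) = 2 then - ln (norm z) / (2 * pi)
     else norm z powr (2 - real CARD('n)) /
          (real CARD('n) * (real CARD('n) - 2) * measure lborel (ball (0::real^'n) 1)))"

definition dirichlet_green :: "(real^'n) set \<Rightarrow> (real^'n \<Rightarrow> real^'n \<Rightarrow> real) \<Rightarrow> bool" where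
  "dirichlet_green \<Omega> G \<longleftrightarrow>
     (\<forall>x\<in>\<Omega>. \<exists>H. has_laplacian_on \<Omega> H (\<lambda>_. 0) \<and> continuous_on (closure \<Omega>) H \<and>
        (\<forall>y\<in>frontier \<Omega>. H y = fund_sol (x - y)) \<and>
        (\<forall>y\<in>closure \<Omega>. G x y = fund_sol (x - y) - H y))"

definition green_op :: "(real^'n) set \<Rightarrow> (real^'n \<Rightarrow> real^'n \<Rightarrow> real) \<Rightarrow> (real^'n \<Rightarrow> real) \<Rightarrow> real^'n \<Rightarrow> real" where
  "green_op \<Omega> G \<rho> x = (LINT y:\<Omega>|lborel. G x y * \<rho> y)"

definition admissible :: "(real^'n) set \<Rightarrow> real \<Rightarrow> (real^'n \<Rightarrow> real) \<Rightarrow> bool" where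
  "admissible \<Omega> p \<rho> \<longleftrightarrow> \<rho> \<in> borel_measurable lborel \<and> (\<forall>x\<in>\<Omega>. 0 \<le> \<rho> x) \<and>
     set_integrable lborel \<Omega> (\<lambda>x. \<bar>\<rho> x\<bar> powr (1 + 1/p)) \<and>
     (LINT x:\<Omega>|lborel. \<rho> x) = 1"

definition energy :: "(real^'n) set \<Rightarrow> (real^'n \<Rightarrow> real^'n \<Rightarrow> real) \<Rightarrow> real \<Rightarrow> real \<Rightarrow> (real^'n \<Rightarrow> real) \<Rightarrow> real" where
  "energy \<Omega> G p lam \<rho> = p / (p + 1) * (LINT x:\<Omega>|lborel. \<bar>\<rho> x\<bar> powr (1 + 1/p))
      - lam / 2 * (LINT x:\<Omega>|lborel. \<rho> x * green_op \<Omega> G \<rho> x)"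

definition solves_P :: "real \<Rightarrow> (real^'n) set \<Rightarrow> real \<Rightarrow> real \<Rightarrow> real \<Rightarrow> (real^'n \<Rightarrow> real) \<Rightarrow> bool" where
  "solves_P b \<Omega> p lam \<alpha> \<psi> \<longleftrightarrow>
     C2b_closure b \<Omega> \<psi> \<and>
     has_laplacian_on \<Omega> \<psi> (\<lambda>x. - (pospart (\<alpha> + lam * \<psi> x) powr p)) \<and>
     (\<forall>x\<in>frontier \<Omega>. \<psi> x = 0) \<and>
     (LINT x:\<Omega>|lborel. pospart (\<alpha> + lam * \<psi> x) powr p) = 1"

text \<open>Variational solution: a solution whose density rho = [alpha + lam psi]_+^p minimizes
  F_lambda over the admissible set and satisfies psi = G[rho] (so alpha is the
  Lagrange multiplier of the mass constraint in the Euler-Lagrange equation).\<close>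
definition variational_solution :: "real \<Rightarrow> (real^'n) set \<Rightarrow> (real^'n \<Rightarrow> real^'n \<Rightarrow> real) \<Rightarrow> real \<Rightarrow> real
      \<Rightarrow> real \<Rightarrow> (real^'n \<Rightarrow> real) \<Rightarrow> bool" where
  "variational_solution b \<Omega> G p lam \<alpha> \<psi> \<longleftrightarrow>
     solves_P b \<Omega> p lam \<alpha> \<psi> \<and>
     (let \<rho> = (\<lambda>x. pospart (\<alpha> + lam * \<psi> x) powr p) in
        admissible \<Omega> p \<rho> \<and>
        (\<forall>\<sigma>. admissible \<Omega> p \<sigma> \<longrightarrow> energy \<Omega> G p lam \<rho> \<le> energy \<Omega> G p lam \<sigma>) \<and>
        (\<forall>x\<in>\<Omega>. \<psi> x = green_op \<Omega> G \<rho> x))"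

end

theory Submission
  imports Defs
begin

lemma second_deriv_min:
  fixes k k1 k2 :: "real \<Rightarrow> real" and d :: real
  assumes d: "0 < d"
    and D1: "\<And>t. \<bar>t\<bar> < d \<Longrightarrow> (k has_real_derivative k1 t) (at t)"
    and D2: "\<And>t. \<bar>t\<bar> < d \<Longrightarrow> (k1 has_real_derivative k2 t) (at t)"
    and c: "isCont k2 0"
    and mn: "\<And>t. \<bar>t\<bar> < d \<Longrightarrow> k 0 \<le> k t"
  shows "0 \<le> k2 0"
proof (rule ccontr)
  assume neg: "\<not> 0 \<le> k2 0"
  have hpos: "- k2 0 > 0" using neg by simp
  have "\<forall>r>0. \<exists>s>0. \<forall>x. x \<noteq> 0 \<and> norm (x - 0) < s \<longrightarrow> norm (k2 x - k2 0) < r"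
    using c by (simp add: isCont_def LIM_eq)
  then obtain e where e: "e > 0" "\<forall>x. x \<noteq> 0 \<and> norm (x - 0) < e \<longrightarrow> norm (k2 x - k2 0) < - k2 0"
    using hpos by blast
  define d' where "d' = min d e"
  have d': "d' > 0" "d' \<le> d" "d' \<le> e" using d e by (auto simp: d'_def)
  have k2neg: "k2 t < 0" if "\<bar>t\<bar> < d'" for t
  proof (cases "t = 0")
    case True then show ?thesis using hpos by simp
  next
    case False
    then have "norm (k2 t - k2 0) < - k2 0" using e(2) that d' by auto
    then show ?thesis by simp
  qed
  have k10: "k1 0 = 0"
    by (rule DERIV_local_min[OF D1[of 0] d]) (use d mn in auto)
  have k1neg: "k1 s < 0" if "0 < s" "s < d'" for s
  proof -
    have "\<exists>z. 0 < z \<and> z < s \<and> (k1 s - k1 0 = (s - 0) * k2 z)"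
    proof (rule MVT2)
      show "0 < s" by fact
      show "(k1 has_real_derivative k2 x) (at x)" if "0 \<le> x" "x \<le> s" for x
        using D2[of x] that \<open>s < d'\<close> d' by auto
    qed
    then obtain z where z: "0 < z" "z < s" "k1 s - k1 0 = (s - 0) * k2 z" by blast
    have "k2 z < 0" using k2neg[of z] z that by auto
    then show ?thesis using z k10 that by (simp add: mult_pos_neg)
  qed
  define t where "t = d' / 2"
  have t: "0 < t" "t < d'" using d' by (auto simp: t_def)
  have "\<exists>z. 0 < z \<and> z < t \<and> (k t - k 0 = (t - 0) * k1 z)"
  proof (rule MVT2)
    show "0 < t" using t by simp
    show "(k has_real_derivative k1 x) (at x)" if "0 \<le> x" "x \<le> t" for x
      using D1[of x] that t d' by auto
  qed
  then obtain z where z: "0 < z" "z < t" "k t - k 0 = (t - 0) * k1 z" by blast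
  have "k1 z < 0" using k1neg[of z] z t by auto
  then have "t * k1 z < 0" using t(1) by (simp add: mult_pos_neg)
  then have "k t < k 0" using z by simp
  then show False using mn[of t] t d' by auto
qed

lemma min_principle:
  fixes \<Omega> :: "(real^'n) set" and u :: "real^'n \<Rightarrow> real"
  assumes op: "open \<Omega>" and bd: "bounded \<Omega>"
    and cu: "continuous_on (closure \<Omega>) u"
    and bdry: "\<forall>x\<in>frontier \<Omega>. u x = 0"
    and C2: "C2_with \<Omega> u D D2"
    and lap: "\<forall>x\<in>\<Omega>. (\<Sum>i\<in>UNIV. D2 i i x) \<le> 0"
    and x0: "x0 \<in> \<Omega>"
  shows "0 \<le> u x0"
proof (rule ccontr)
  assume "\<not> 0 \<le> u x0"
  then have neg: "u x0 < 0" by simp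
  obtain R where R: "\<forall>y\<in>closure \<Omega>. norm y \<le> R"
    using bounded_closure[OF bd] unfolding bounded_iff by blast
  define \<epsilon> where "\<epsilon> = - u x0 / (2 * (R\<^sup>2 + 1))"
  have dpos: "2 * (R\<^sup>2 + 1) > (0::real)" by (intro mult_pos_pos add_nonneg_pos) auto
  have epos: "\<epsilon> > 0" using neg dpos unfolding \<epsilon>_def by (intro divide_pos_pos) auto
  define w where "w y = u y - \<epsilon> * (norm y)\<^sup>2" for y
  have cw: "continuous_on (closure \<Omega>) w"
    unfolding w_def by (intro continuous_intros cu)
  have ne: "closure \<Omega> \<noteq> {}" using x0 closure_subset by blast
  obtain xm where xm: "xm \<in> closure \<Omega>" "\<And>y. y \<in> closure \<Omega> \<Longrightarrow> w xm \<le> w y"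
    using continuous_attains_inf[OF compact_closure[THEN iffD2, OF bd] ne cw] by blast
  have "xm \<notin> frontier \<Omega>"
  proof
    assume f: "xm \<in> frontier \<Omega>"
    then have "w xm = - \<epsilon> * (norm xm)\<^sup>2" using bdry unfolding w_def by simp
    also have "\<dots> \<ge> - \<epsilon> * R\<^sup>2"
    proof -
      have "norm xm \<le> R" using R xm(1) by blast
      then have "(norm xm)\<^sup>2 \<le> R\<^sup>2" by (simp add: power_mono)
      then show ?thesis using epos by simp
    qed
    finally have a: "- \<epsilon> * R\<^sup>2 \<le> w xm" .
    have "- \<epsilon> * R\<^sup>2 = u x0 * (R\<^sup>2 / (2 * (R\<^sup>2 + 1)))"
      unfolding \<epsilon>_def by (simp add: field_simps)
    also have "\<dots> > u x0"
    proof -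
      have h: "0 \<le> R\<^sup>2" by simp
      have "R\<^sup>2 < 2 * (R\<^sup>2 + 1)" using h by (smt (verit))
      then have "R\<^sup>2 / (2 * (R\<^sup>2 + 1)) < 1" using dpos by (simp add: divide_less_eq)
      then show ?thesis using neg
        by (metis mult.right_neutral mult_less_cancel_left_neg)
    qed
    finally have "u x0 < w xm" using a by linarith
    moreover have "w x0 \<le> u x0" unfolding w_def using epos by simp
    moreover have "w xm \<le> w x0" using xm(2) x0 closure_subset by blast
    ultimately show False by linarith
  qed
  then have xmO: "xm \<in> \<Omega>" using xm(1) op
    by (simp add: frontier_def interior_open)
  obtain d where d: "d > 0" "ball xm d \<subseteq> \<Omega>" using op xmO open_contains_ball by blast
  have Dd: "\<And>x. x \<in> \<Omega> \<Longrightarrow> (u has_derivative (\<lambda>h. \<Sum>i\<in>UNIV. D i x * h $ i)) (at x)"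
    and DDd: "\<And>i x. x \<in> \<Omega> \<Longrightarrow> (D i has_derivative (\<lambda>h. \<Sum>j\<in>UNIV. D2 i j x * h $ j)) (at x)"
    and cD2: "\<And>i j. continuous_on \<Omega> (D2 i j)"
    using C2 unfolding C2_with_def by auto
  have key: "2 * \<epsilon> \<le> D2 i i xm" for i
  proof -
    define e :: "real^'n" where "e = axis i 1"
    define y where "y t = xm + t *\<^sub>R e" for t
    have yin: "y t \<in> \<Omega>" if "\<bar>t\<bar> < d" for t
    proof -
      have "dist xm (y t) = \<bar>t\<bar>" unfolding y_def e_def by (simp add: dist_norm)
      then show ?thesis using d that by auto
    qed
    have ny: "(norm (y t))\<^sup>2 = (norm xm)\<^sup>2 + 2 * t * xm $ i + t\<^sup>2" for t
    proof -
      have "(norm (y t))\<^sup>2 = y t \<bullet> y t" by (simp add: power2_norm_eq_inner)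
      also have "\<dots> = xm \<bullet> xm + 2 * t * (xm \<bullet> e) + t\<^sup>2 * (e \<bullet> e)"
        unfolding y_def by (simp add: inner_add_left inner_add_right inner_commute power2_eq_square algebra_simps)
      also have "\<dots> = (norm xm)\<^sup>2 + 2 * t * xm $ i + t\<^sup>2"
        unfolding e_def by (simp add: power2_norm_eq_inner inner_axis)
      finally show ?thesis .
    qed
    have lin: "(\<lambda>h. \<Sum>j\<in>UNIV. F j * (h *\<^sub>R e) $ j) = (\<lambda>h. F i * h)" for F :: "'n \<Rightarrow> real"
      unfolding e_def by (auto simp: axis_def if_distrib cong: if_cong)
    have dy: "(y has_derivative (\<lambda>h. h *\<^sub>R e)) (at t)" for t
      unfolding y_def by (auto intro!: derivative_eq_intros)
    have gd: "((\<lambda>t. u (y t)) has_real_derivative D i (y t)) (at t)" if "\<bar>t\<bar> < d" for t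
    proof -
      have "((\<lambda>t. u (y t)) has_derivative (\<lambda>h. \<Sum>j\<in>UNIV. D j (y t) * (h *\<^sub>R e) $ j)) (at t)"
        using has_derivative_compose[OF dy Dd[OF yin[OF that]]] by (simp add: o_def)
      then show ?thesis unfolding has_field_derivative_def lin[of "\<lambda>j. D j (y t)"]
        by (simp add: mult.commute)
    qed
    have gd2: "((\<lambda>t. D i (y t)) has_real_derivative D2 i i (y t)) (at t)" if "\<bar>t\<bar> < d" for t
    proof -
      have "((\<lambda>t. D i (y t)) has_derivative (\<lambda>h. \<Sum>j\<in>UNIV. D2 i j (y t) * (h *\<^sub>R e) $ j)) (at t)"
        using has_derivative_compose[OF dy DDd[OF yin[OF that]]] by (simp add: o_def)
      then show ?thesis unfolding has_field_derivative_def lin[of "\<lambda>j. D2 i j (y t)"]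
        by (simp add: mult.commute)
    qed
    define k where "k t = u (y t) - \<epsilon> * ((norm xm)\<^sup>2 + 2 * t * xm $ i + t\<^sup>2)" for t
    define k1 where "k1 t = D i (y t) - \<epsilon> * (2 * xm $ i + 2 * t)" for t
    define k2 where "k2 t = D2 i i (y t) - 2 * \<epsilon>" for t
    have "0 \<le> k2 0"
    proof (rule second_deriv_min[of d k k1])
      show "0 < d" by fact
      show "(k has_real_derivative k1 t) (at t)" if "\<bar>t\<bar> < d" for t
        unfolding k_def k1_def using gd[OF that]
        by (auto intro!: derivative_eq_intros simp: algebra_simps)
      show "(k1 has_real_derivative k2 t) (at t)" if "\<bar>t\<bar> < d" for t
        unfolding k1_def k2_def using gd2[OF that]
        by (auto intro!: derivative_eq_intros simp: algebra_simps)
      have c2: "isCont (D2 i i) xm" using cD2 op xmO continuous_on_eq_continuous_at by blast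
      have c1: "isCont y 0" unfolding y_def by (intro continuous_intros)
      have y0: "y 0 = xm" unfolding y_def by simp
      have "isCont (\<lambda>t. D2 i i (y t)) 0"
        using isCont_o2[OF c1, of "D2 i i"] c2 unfolding y0 .
      then show "isCont k2 0" unfolding k2_def by (intro continuous_intros)
      show "k 0 \<le> k t" if "\<bar>t\<bar> < d" for t
      proof -
        have "w xm \<le> w (y t)" using xm(2) yin[OF that] closure_subset by blast
        then show ?thesis unfolding k_def w_def ny[symmetric] by (simp add: y_def)
      qed
    qed
    then show ?thesis unfolding k2_def y_def by simp
  qed
  have "(\<Sum>i\<in>(UNIV::'n set). 2 * \<epsilon>) \<le> (\<Sum>i\<in>UNIV. D2 i i xm)" using key by (intro sum_mono) auto
  moreover have "(\<Sum>i\<in>(UNIV::'n set). 2 * \<epsilon>) > 0" using epos by simp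
  moreover have "(\<Sum>i\<in>UNIV. D2 i i xm) \<le> 0" using lap xmO by blast
  ultimately show False by linarith
qed

theorem theorem1p22:
  fixes \<Omega> :: "(real^'n) set" and b p :: real and G :: "real^'n \<Rightarrow> real^'n \<Rightarrow> real"
    and lam \<alpha> :: "nat \<Rightarrow> real" and \<psi> :: "nat \<Rightarrow> real^'n \<Rightarrow> real"
  assumes N: "CARD('n) \<ge> 2"
    and p: "1 < p" "CARD('n) \<ge> 3 \<Longrightarrow> p < real CARD('n) / (real CARD('n) - 2)"
    and b: "0 < b" "b < 1"
    and dom: "C2b_domain b \<Omega>"
    and vol: "emeasure lborel \<Omega> = 1"
    and G: "dirichlet_green \<Omega> G"
    and var: "\<And>n. variational_solution b \<Omega> G p (lam n) (\<alpha> n) (\<psi> n)"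
    and lam_inf: "filterlim lam at_top sequentially"
    and alpha_inf: "filterlim (\<lambda>n. \<bar>\<alpha> n\<bar>) at_top sequentially"
  shows "(\<exists>C2>0. \<forall>\<^sub>F n in sequentially.
            (LINT x:\<Omega>|lborel. pospart (\<alpha> n + lam n * \<psi> n x) powr (p + 1)) \<le> C2 * \<bar>\<alpha> n\<bar>)
       \<and> limsup (\<lambda>n. ereal ((LINT x:\<Omega>|lborel. pospart (\<alpha> n + lam n * \<psi> n x) powr (p + 1)) / \<bar>\<alpha> n\<bar>))
           \<le> ereal ((p + 1) / (p - 1))"
proof -
  have opn: "open \<Omega>" and bdd: "bounded \<Omega>" using dom unfolding C2b_domain_def by auto
  have Osets: "\<Omega> \<in> sets lborel" using opn by simp
  define \<rho> where "\<rho> n x = pospart (\<alpha> n + lam n * \<psi> n x) powr p" for n x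
  define I where "I n = (LINT x:\<Omega>|lborel. pospart (\<alpha> n + lam n * \<psi> n x) powr (p + 1))" for n
  define E where "E n = (LINT x:\<Omega>|lborel. \<rho> n x * \<psi> n x)" for n
  have sol: "solves_P b \<Omega> p (lam n) (\<alpha> n) (\<psi> n)"
    and adm: "admissible \<Omega> p (\<rho> n)"
    and mini: "\<And>\<sigma>. admissible \<Omega> p \<sigma> \<Longrightarrow> energy \<Omega> G p (lam n) (\<rho> n) \<le> energy \<Omega> G p (lam n) \<sigma>"
    and gr: "\<And>x. x \<in> \<Omega> \<Longrightarrow> \<psi> n x = green_op \<Omega> G (\<rho> n) x" for n
    using var[of n] unfolding variational_solution_def Let_def \<rho>_def[abs_def] by auto
  have rho_nn: "0 \<le> \<rho> n x" for n x unfolding \<rho>_def by simp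
  have rho_meas: "\<rho> n \<in> borel_measurable lborel" for n using adm[of n] unfolding admissible_def by auto
  have rho_int: "set_integrable lborel \<Omega> (\<rho> n)" for n
  proof (rule ccontr)
    assume "\<not> set_integrable lborel \<Omega> (\<rho> n)"
    then have "(LINT x:\<Omega>|lborel. \<rho> n x) = 0"
      unfolding set_integrable_def set_lebesgue_integral_def by (rule not_integrable_integral_eq)
    then show False using adm[of n] unfolding admissible_def by simp
  qed
  have C2b: "C2b_closure b \<Omega> (\<psi> n)" for n using sol[of n] unfolding solves_P_def by auto
  have psi_cont: "continuous_on (closure \<Omega>) (\<psi> n)" for n
    using C2b[of n] unfolding C2b_closure_def by auto
  have psi_bdd: "\<exists>B>0. \<forall>x\<in>\<Omega>. \<bar>\<psi> n x\<bar> \<le> B" for n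
  proof -
    have "bounded (\<psi> n ` \<Omega>)" using C2b[of n] unfolding C2b_closure_def by auto
    then show ?thesis unfolding bounded_pos by auto
  qed
  have psi_meas: "(\<lambda>x. indicator \<Omega> x *\<^sub>R \<psi> n x) \<in> borel_measurable lborel" for n
  proof -
    have "continuous_on \<Omega> (\<psi> n)" using psi_cont[of n] closure_subset continuous_on_subset by blast
    then show ?thesis using borel_measurable_continuous_on_indicator[of \<Omega> "\<psi> n"] opn by simp
  qed
  have rp_int: "set_integrable lborel \<Omega> (\<lambda>x. \<rho> n x * \<psi> n x)" for n
  proof -
    obtain B where B: "B > 0" "\<forall>x\<in>\<Omega>. \<bar>\<psi> n x\<bar> \<le> B" using psi_bdd[of n] by blast
    have i1: "integrable lborel (\<lambda>x. B *\<^sub>R (indicator \<Omega> x *\<^sub>R \<rho> n x))"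
      using rho_int[of n] unfolding set_integrable_def by simp
    have eq: "(\<lambda>x. indicator \<Omega> x *\<^sub>R (\<rho> n x * \<psi> n x)) = (\<lambda>x. \<rho> n x * (indicator \<Omega> x *\<^sub>R \<psi> n x))"
      by (auto simp: indicator_def)
    have m: "(\<lambda>x. indicator \<Omega> x *\<^sub>R (\<rho> n x * \<psi> n x)) \<in> borel_measurable lborel"
      unfolding eq using rho_meas[of n] psi_meas[of n] by (intro borel_measurable_times) auto
    have "norm (indicator \<Omega> x *\<^sub>R (\<rho> n x * \<psi> n x)) \<le> norm (B *\<^sub>R (indicator \<Omega> x *\<^sub>R \<rho> n x))" for x
    proof (cases "x \<in> \<Omega>")
      case True
      have "\<bar>\<rho> n x * \<psi> n x\<bar> = \<rho> n x * \<bar>\<psi> n x\<bar>" using rho_nn[of n x] by (simp add: abs_mult)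
      also have "\<dots> \<le> \<rho> n x * B" using B True rho_nn[of n x] by (intro mult_left_mono) auto
      finally show ?thesis using True B rho_nn[of n x] by (simp add: mult.commute)
    qed simp
    then show ?thesis unfolding set_integrable_def
      by (intro Bochner_Integration.integrable_bound[OF i1 m]) auto
  qed
  have pw1: "\<bar>pospart s powr p\<bar> powr (1 + 1 / p) = pospart s powr (p + 1)" for s
  proof -
    have "p * (1 + 1 / p) = p + 1" using p(1) by (simp add: field_simps)
    then show ?thesis by (simp add: powr_powr)
  qed
  have pw2: "pospart s powr (p + 1) = pospart s powr p * s" for s
  proof (cases "s > 0")
    case True
    then have "pospart s = s" unfolding pospart_def by simp
    then show ?thesis using True by (simp add: powr_add)
  next
    case False
    then have "pospart s = 0" unfolding pospart_def by simp
    then show ?thesis by simp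
  qed
  have IE: "I n = \<alpha> n + lam n * E n" for n
  proof -
    have "I n = (LINT x:\<Omega>|lborel. \<alpha> n * \<rho> n x + lam n * (\<rho> n x * \<psi> n x))"
      unfolding I_def \<rho>_def pw2 by (simp add: algebra_simps)
    also have "\<dots> = (LINT x:\<Omega>|lborel. \<alpha> n * \<rho> n x) + (LINT x:\<Omega>|lborel. lam n * (\<rho> n x * \<psi> n x))"
      using rho_int[of n] rp_int[of n] by (intro set_integral_add) auto
    also have "\<dots> = \<alpha> n * (LINT x:\<Omega>|lborel. \<rho> n x) + lam n * E n"
      unfolding E_def by simp
    also have "(LINT x:\<Omega>|lborel. \<rho> n x) = 1" using adm[of n] unfolding admissible_def by simp
    finally show ?thesis by simp
  qed
  have en: "energy \<Omega> G p (lam m) (\<rho> n) = p / (p + 1) * I n - lam m / 2 * E n" for m n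
  proof -
    have "(LINT x:\<Omega>|lborel. \<bar>\<rho> n x\<bar> powr (1 + 1 / p)) = I n"
      unfolding I_def \<rho>_def pw1 ..
    moreover have "(LINT x:\<Omega>|lborel. \<rho> n x * green_op \<Omega> G (\<rho> n) x) = E n"
      unfolding E_def using gr[of _ n] by (intro set_lebesgue_integral_cong[OF Osets]) auto
    ultimately show ?thesis unfolding energy_def by simp
  qed
  have psi0_nn: "0 \<le> \<psi> 0 x" if "x \<in> \<Omega>" for x
  proof -
    obtain D D2 where DD: "C2_with \<Omega> (\<psi> 0) D D2"
      and lapl: "\<forall>x\<in>\<Omega>. - (pospart (\<alpha> 0 + lam 0 * \<psi> 0 x) powr p) = (\<Sum>i\<in>UNIV. D2 i i x)"
      using sol[of 0] unfolding solves_P_def has_laplacian_on_def by blast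
    have lap: "\<forall>x\<in>\<Omega>. (\<Sum>i\<in>UNIV. D2 i i x) \<le> 0"
    proof
      fix x assume "x \<in> \<Omega>"
      then have "(\<Sum>i\<in>UNIV. D2 i i x) = - \<rho> 0 x" using lapl unfolding \<rho>_def by simp
      then show "(\<Sum>i\<in>UNIV. D2 i i x) \<le> 0" using rho_nn[of 0 x] by simp
    qed
    have fr: "\<forall>x\<in>frontier \<Omega>. \<psi> 0 x = 0" using sol[of 0] unfolding solves_P_def by auto
    show ?thesis by (rule min_principle[OF opn bdd psi_cont fr DD lap that])
  qed
  have E0: "0 \<le> E 0"
    unfolding E_def set_lebesgue_integral_def
    by (rule Bochner_Integration.integral_nonneg) (auto simp: indicator_def intro!: mult_nonneg_nonneg rho_nn psi0_nn)
  define A where "A = 2 * p * I 0 / (p - 1)"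
  define k where "k = (p + 1) / (p - 1)"
  have pm1: "p - 1 > 0" using p(1) by simp
  have kpos: "k > 0" unfolding k_def using p(1) by simp
  have bound: "I n \<le> A + k * \<bar>\<alpha> n\<bar>" if lpos: "0 \<le> lam n" for n
  proof -
    have "energy \<Omega> G p (lam n) (\<rho> n) \<le> energy \<Omega> G p (lam n) (\<rho> 0)" by (rule mini[OF adm])
    then have e1: "p / (p + 1) * I n - lam n / 2 * E n \<le> p / (p + 1) * I 0 - lam n / 2 * E 0"
      unfolding en .
    have "lam n / 2 * E 0 \<ge> 0" using lpos E0 by simp
    with e1 have e2: "p / (p + 1) * I n - (I n - \<alpha> n) / 2 \<le> p / (p + 1) * I 0"
      using IE[of n] by (simp add: algebra_simps)
    have pp: "p + 1 > 0" using p(1) by simp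
    have "2 * (p + 1) * (p / (p + 1) * I n - (I n - \<alpha> n) / 2) \<le> 2 * (p + 1) * (p / (p + 1) * I 0)"
      using e2 pp by (intro mult_left_mono) auto
    moreover have "2 * (p + 1) * (p / (p + 1) * I n - (I n - \<alpha> n) / 2) = (p - 1) * I n + (p + 1) * \<alpha> n"
      using pp by (simp add: field_simps)
    moreover have "2 * (p + 1) * (p / (p + 1) * I 0) = 2 * p * I 0"
      using pp by (simp add: field_simps)
    ultimately have e3: "(p - 1) * I n \<le> 2 * p * I 0 - (p + 1) * \<alpha> n"
      by linarith
    have "- ((p + 1) * \<alpha> n) \<le> (p + 1) * \<bar>\<alpha> n\<bar>" using pp
      by (metis abs_ge_minus_self abs_mult abs_of_pos minus_mult_right)
    with e3 have "(p - 1) * I n \<le> 2 * p * I 0 + (p + 1) * \<bar>\<alpha> n\<bar>" by linarith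
    then have "I n \<le> (2 * p * I 0 + (p + 1) * \<bar>\<alpha> n\<bar>) / (p - 1)"
      using pm1 by (simp add: field_simps)
    also have "\<dots> = A + k * \<bar>\<alpha> n\<bar>" unfolding A_def k_def by (rule add_divide_distrib[THEN trans]) simp
    finally show ?thesis .
  qed
  have ev_lam: "\<forall>\<^sub>F n in sequentially. 0 \<le> lam n"
    using lam_inf by (simp add: filterlim_at_top)
  have ev_alpha: "\<forall>\<^sub>F n in sequentially. \<bar>A\<bar> + 1 \<le> \<bar>\<alpha> n\<bar>"
    using alpha_inf by (simp add: filterlim_at_top)
  have part1: "\<exists>C2>0. \<forall>\<^sub>F n in sequentially.
            (LINT x:\<Omega>|lborel. pospart (\<alpha> n + lam n * \<psi> n x) powr (p + 1)) \<le> C2 * \<bar>\<alpha> n\<bar>"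
  proof (intro exI conjI)
    show "k + 1 > 0" using kpos by simp
    show "\<forall>\<^sub>F n in sequentially.
            (LINT x:\<Omega>|lborel. pospart (\<alpha> n + lam n * \<psi> n x) powr (p + 1)) \<le> (k + 1) * \<bar>\<alpha> n\<bar>"
      using ev_lam ev_alpha
    proof eventually_elim
      case (elim n)
      have "I n \<le> A + k * \<bar>\<alpha> n\<bar>" using bound elim(1) by blast
      also have "\<dots> \<le> (k + 1) * \<bar>\<alpha> n\<bar>" using elim(2) by (simp add: algebra_simps)
      finally show ?case unfolding I_def .
    qed
  qed
  have ev2: "\<forall>\<^sub>F n in sequentially.
      ereal ((LINT x:\<Omega>|lborel. pospart (\<alpha> n + lam n * \<psi> n x) powr (p + 1)) / \<bar>\<alpha> n\<bar>)
      \<le> ereal (k + A / \<bar>\<alpha> n\<bar>)"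
    using ev_lam ev_alpha
  proof eventually_elim
    case (elim n)
    have ap: "\<bar>\<alpha> n\<bar> > 0" using elim(2) by linarith
    have "I n \<le> A + k * \<bar>\<alpha> n\<bar>" using bound elim(1) by blast
    then have "I n / \<bar>\<alpha> n\<bar> \<le> (A + k * \<bar>\<alpha> n\<bar>) / \<bar>\<alpha> n\<bar>"
      using ap by (intro divide_right_mono) auto
    also have "\<dots> = k + A / \<bar>\<alpha> n\<bar>" using ap by (simp add: field_simps)
    finally show ?case unfolding I_def by simp
  qed
  have lim: "(\<lambda>n. ereal (k + A / \<bar>\<alpha> n\<bar>)) \<longlonglongrightarrow> ereal k"
  proof -
    have "(\<lambda>n. A / \<bar>\<alpha> n\<bar>) \<longlonglongrightarrow> 0"
      by (rule tendsto_divide_0[OF tendsto_const filterlim_at_top_imp_at_infinity[OF alpha_inf]])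
    then have "(\<lambda>n. k + A / \<bar>\<alpha> n\<bar>) \<longlonglongrightarrow> k + 0" by (intro tendsto_add tendsto_const)
    then show ?thesis by simp
  qed
  have "limsup (\<lambda>n. ereal ((LINT x:\<Omega>|lborel. pospart (\<alpha> n + lam n * \<psi> n x) powr (p + 1)) / \<bar>\<alpha> n\<bar>))
        \<le> limsup (\<lambda>n. ereal (k + A / \<bar>\<alpha> n\<bar>))"
    by (rule Limsup_mono[OF ev2])
  also have "\<dots> = ereal k" by (rule lim_imp_Limsup[OF trivial_limit_sequentially lim])
  finally show ?thesis using part1 unfolding k_def by blast
qed

end
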